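(* Consider a nonrelativistic quantum system with one degree of freedom and Hamiltonian $$H(\hat q,\hat p)=\frac{\hat p^2}{2m}+\tfrac12 c(\hat q\hat p+\hat p\hat q)+\xi_p\hat p+U(\hat q),$$ with $m>0$, $c,\xi_p\in\mathbb R$ and $U$ a real function. Suppose the system is in a pure state with wave function $\psi(q,t)=\Omega(q,t)e^{iS(q,t)/\hbar}$, $\Omega=|\psi|$. Let $\Delta q^2$ and $\Delta p^2$ be the variances of position and momentum in this state, and let $\mathrm{Cov}(\partial_qS,\partial_qS)=\langle(\partial_qS)^2\rangle-\langle\partial_qS\rangle^2$ with means taken with respect to $\Omega^2dq$. Then $$\Delta p^2\Delta q^2-\mathrm{Cov}(\partial_qS,\partial_qS)\,\Delta q^2-\frac{\hbar^2}{4}\ \ge\ 0 .$$ Moreover, this inequality is stronger than the Robertson–Schrödinger uncertainty relation $$\Delta q^2\Delta p^2-[\mathrm{Cov}(q,p)]^2-\frac{\hbar^2}{4}\ge 0,$$ in the sense that it is a sufficient but not necessary condition for it.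
   Context: The amplitude $\Omega$ is assumed continuous and twice continuously differentiable, with $\int_{\mathbb R}\Omega^2dq=1$ and $\Omega\to0$ as $|q|\to\infty$. Variances are $\Delta q^2=\langle\psi|\hat q^2|\psi\rangle-\langle\psi|\hat q|\psi\rangle^2$, $\Delta p^2=\langle\psi|\hat p^2|\psi\rangle-\langle\psi|\hat p|\psi\rangle^2$, and the symmetrized position–momentum covariance is $\mathrm{Cov}(q,p)=\tfrac12\langle\psi|\hat q\hat p+\hat p\hat q|\psi\rangle-\langle\psi|\hat q|\psi\rangle\langle\psi|\hat p|\psi\rangle$. *)

theory Defs
  imports "HOL-Analysis.Analysis" "HOL-Library.Complex_Order"
begin

definition wavefun :: "real \<Rightarrow> (real \<Rightarrow> real) \<Rightarrow> (real \<Rightarrow> real) \<Rightarrow> real \<Rightarrow> complex" where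
  "wavefun hbar \<Omega> S q = complex_of_real (\<Omega> q) * exp (\<i> * complex_of_real (S q / hbar))"

definition qop :: "(real \<Rightarrow> complex) \<Rightarrow> real \<Rightarrow> complex" where
  "qop f q = complex_of_real q * f q"

definition pop :: "real \<Rightarrow> (real \<Rightarrow> complex) \<Rightarrow> real \<Rightarrow> complex" where
  "pop hbar f q = - \<i> * complex_of_real hbar * vector_derivative f (at q)"

definition expect :: "(real \<Rightarrow> complex) \<Rightarrow> ((real \<Rightarrow> complex) \<Rightarrow> real \<Rightarrow> complex) \<Rightarrow> complex" where
  "expect \<psi> A = (LINT q|lborel. cnj (\<psi> q) * A \<psi> q)"

definition varq :: "(real \<Rightarrow> complex) \<Rightarrow> complex" where
  "varq \<psi> = expect \<psi> (\<lambda>f. qop (qop f)) - (expect \<psi> qop)\<^sup>2"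

definition varp :: "real \<Rightarrow> (real \<Rightarrow> complex) \<Rightarrow> complex" where
  "varp hbar \<psi> = expect \<psi> (\<lambda>f. pop hbar (pop hbar f)) - (expect \<psi> (pop hbar))\<^sup>2"

definition covqp :: "real \<Rightarrow> (real \<Rightarrow> complex) \<Rightarrow> complex" where
  "covqp hbar \<psi> = expect \<psi> (\<lambda>f q. qop (pop hbar f) q + pop hbar (qop f) q) / 2
                    - expect \<psi> qop * expect \<psi> (pop hbar)"

definition mean_Omega :: "(real \<Rightarrow> real) \<Rightarrow> (real \<Rightarrow> real) \<Rightarrow> real" where
  "mean_Omega \<Omega> g = (LINT q|lborel. (\<Omega> q)\<^sup>2 * g q)"

definition cov_dS :: "(real \<Rightarrow> real) \<Rightarrow> (real \<Rightarrow> real) \<Rightarrow> real" where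
  "cov_dS \<Omega> S = mean_Omega \<Omega> (\<lambda>q. (deriv S q)\<^sup>2) - (mean_Omega \<Omega> (deriv S))\<^sup>2"

definition admissible :: "real \<Rightarrow> (real \<Rightarrow> real) \<Rightarrow> (real \<Rightarrow> real) \<Rightarrow> bool" where
  "admissible hbar \<Omega> S \<longleftrightarrow>
     (\<forall>q. \<Omega> differentiable at q) \<and> (\<forall>q. deriv \<Omega> differentiable at q) \<and>
     continuous_on UNIV (deriv (deriv \<Omega>)) \<and>
     (\<forall>q. S differentiable at q) \<and> (\<forall>q. deriv S differentiable at q) \<and>
     continuous_on UNIV (deriv (deriv S)) \<and>
     has_bochner_integral lborel (\<lambda>q. (\<Omega> q)\<^sup>2) 1 \<and>
     (\<Omega> \<longlongrightarrow> 0) at_top \<and> (\<Omega> \<longlongrightarrow> 0) at_bot \<and>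
     integrable lborel (\<lambda>q. q\<^sup>2 * (\<Omega> q)\<^sup>2) \<and>
     integrable lborel (\<lambda>q. (norm (vector_derivative (wavefun hbar \<Omega> S) (at q)))\<^sup>2) \<and>
     integrable lborel (\<lambda>q. cnj (wavefun hbar \<Omega> S q) * pop hbar (pop hbar (wavefun hbar \<Omega> S)) q)"

end

theory Submission
  imports Defs "HOL-Probability.Probability" "HOL-Real_Asymp.Real_Asymp"
begin


lemma emeasure_Ici_infinite: "emeasure lborel {R::real..} = \<infinity>"
proof (rule ccontr)
  assume "emeasure lborel {R..} \<noteq> \<infinity>"
  then obtain r where r: "emeasure lborel {R..} = ennreal r" "r \<ge> 0"
    by (cases "emeasure lborel {R..}" rule: ennreal_cases) auto
  have "emeasure lborel {R..R + (r+1)} \<le> emeasure lborel {R..}"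
    by (rule emeasure_mono) auto
  then have "ennreal (r+1) \<le> ennreal r" using r by simp
  then show False using r by (simp add: ennreal_le_iff)
qed

lemma integrable_limit_zero_top:
  fixes F :: "real \<Rightarrow> 'a::{banach, second_countable_topology}"
  assumes int: "integrable lborel F" and lim: "(F \<longlongrightarrow> A) at_top"
  shows "A = 0"
proof (rule ccontr)
  assume A: "A \<noteq> 0"
  define c where "c = norm A / 2"
  have c: "c > 0" using A by (simp add: c_def)
  have "\<forall>\<^sub>F x in at_top. norm (F x) > c"
    using tendsto_norm[OF lim] c unfolding c_def
    by (intro order_tendstoD(1)) auto
  then obtain R where R: "\<And>x. x \<ge> R \<Longrightarrow> norm (F x) > c"
    by (auto simp: eventually_at_top_linorder)
  have "integrable lborel (\<lambda>x. indicator {R..} x * c)"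
  proof (rule Bochner_Integration.integrable_bound[OF int])
    show "(\<lambda>x. indicator {R..} x * c) \<in> borel_measurable lborel" by simp
    show "AE x in lborel. norm (indicator {R..} x * c) \<le> norm (F x)"
      using R c by (auto simp: indicator_def less_imp_le)
  qed
  then have "integrable lborel (\<lambda>x. indicator {R..} x * c / c :: real)"
    by (rule integrable_divide_zero)
  then have "integrable lborel (indicator {R..} :: real \<Rightarrow> real)"
    using c by (simp add: field_simps)
  then have "emeasure lborel {R..} < \<infinity>"
    by (simp add: integrable_indicator_iff)
  then show False by (simp add: emeasure_Ici_infinite)
qed


lemma integrable_limit_zero_bot:
  fixes F :: "real \<Rightarrow> 'a::{banach, second_countable_topology}"
  assumes int: "integrable lborel F" and lim: "(F \<longlongrightarrow> A) at_bot"
  shows "A = 0"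
proof (rule ccontr)
  assume A: "A \<noteq> 0"
  define c where "c = norm A / 2"
  have c: "c > 0" using A by (simp add: c_def)
  have "\<forall>\<^sub>F x in at_bot. norm (F x) > c"
    using tendsto_norm[OF lim] c unfolding c_def
    by (intro order_tendstoD(1)) auto
  then obtain R where R: "\<And>x. x \<le> R \<Longrightarrow> norm (F x) > c"
    by (auto simp: eventually_at_bot_linorder)
  have "integrable lborel (\<lambda>x. indicator {..R} x * c)"
  proof (rule Bochner_Integration.integrable_bound[OF int])
    show "(\<lambda>x. indicator {..R} x * c) \<in> borel_measurable lborel" by simp
    show "AE x in lborel. norm (indicator {..R} x * c) \<le> norm (F x)"
      using R c by (auto simp: indicator_def less_imp_le)
  qed
  then have "integrable lborel (\<lambda>x. indicator {..R} x * c / c :: real)"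
    by (rule integrable_divide_zero)
  then have "integrable lborel (indicator {..R} :: real \<Rightarrow> real)"
    using c by (simp add: field_simps)
  then have fin: "emeasure lborel {..R} < \<infinity>"
    by (simp add: integrable_indicator_iff)
  then obtain r where r: "emeasure lborel {..R} = ennreal r" "r \<ge> 0"
    by (cases "emeasure lborel {..R}" rule: ennreal_cases) auto
  have "emeasure lborel {R-(r+1)..R} \<le> emeasure lborel {..R}"
    by (rule emeasure_mono) auto
  then have "ennreal (r+1) \<le> ennreal r" using r by simp
  then show False using r by (simp add: ennreal_le_iff)
qed

lemma integral_deriv_zero:
  fixes F f :: "real \<Rightarrow> complex"
  assumes D: "\<And>x. (F has_vector_derivative f x) (at x)"
    and If: "integrable lborel f" and IF: "integrable lborel F"
  shows "integral\<^sup>L lborel f = 0"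
proof -
  have si: "set_integrable lborel A f" if "A \<in> sets lborel" for A
    unfolding set_integrable_def using integrable_mult_indicator[OF that If] .
  have FTC: "(LINT x:{a..b}|lborel. f x) = F b - F a" if "a \<le> b" for a b
  proof -
    have "(f has_integral (F b - F a)) {a..b}"
      by (rule fundamental_theorem_of_calculus[OF that])
         (auto intro: has_vector_derivative_at_within[OF D])
    moreover have "(LINT x:{a..b}|lborel. f x) = integral {a..b} f"
      by (rule set_borel_integral_eq_integral(2)[OF si]) simp
    ultimately show ?thesis by (simp add: integral_unique)
  qed
  have "((\<lambda>b. LINT x:{0..b}|lborel. f x) \<longlongrightarrow> (LINT x:{0..}|lborel. f x)) at_top"
    by (rule tendsto_set_lebesgue_integral_at_top) (auto intro: si)
  moreover have "\<forall>\<^sub>F b in at_top. (LINT x:{0..b}|lborel. f x) = F b - F 0"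
    using FTC by (auto simp: eventually_at_top_linorder intro!: exI[of _ 0])
  ultimately have "((\<lambda>b. F b - F 0) \<longlongrightarrow> (LINT x:{0..}|lborel. f x)) at_top"
    by (rule Lim_transform_eventually)
  then have "((\<lambda>b. (F b - F 0) + F 0) \<longlongrightarrow> (LINT x:{0..}|lborel. f x) + F 0) at_top"
    by (intro tendsto_intros)
  then have "(F \<longlongrightarrow> (LINT x:{0..}|lborel. f x) + F 0) at_top" by simp
  then have top: "(LINT x:{0..}|lborel. f x) + F 0 = 0"
    by (rule integrable_limit_zero_top[OF IF])
  have "((\<lambda>a. LINT x:{a..0}|lborel. f x) \<longlongrightarrow> (LINT x:{..0}|lborel. f x)) at_bot"
    by (rule tendsto_set_lebesgue_integral_at_bot) (auto intro: si)
  moreover have "\<forall>\<^sub>F a in at_bot. (LINT x:{a..0}|lborel. f x) = F 0 - F a"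
    using FTC by (auto simp: eventually_at_bot_linorder intro!: exI[of _ 0])
  ultimately have "((\<lambda>a. F 0 - F a) \<longlongrightarrow> (LINT x:{..0}|lborel. f x)) at_bot"
    by (rule Lim_transform_eventually)
  then have "((\<lambda>a. F 0 - (F 0 - F a)) \<longlongrightarrow> F 0 - (LINT x:{..0}|lborel. f x)) at_bot"
    by (intro tendsto_intros)
  then have "(F \<longlongrightarrow> F 0 - (LINT x:{..0}|lborel. f x)) at_bot" by simp
  then have bot: "F 0 - (LINT x:{..0}|lborel. f x) = 0"
    by (rule integrable_limit_zero_bot[OF IF])
  have "(LINT x:{..0} \<union> {0..}|lborel. f x) = (LINT x:{..0}|lborel. f x) + (LINT x:{0..}|lborel. f x)"
    by (rule set_integral_Un_AE) (auto intro!: si AE_I2[THEN AE_mp[OF AE_lborel_singleton[of 0]]] simp: AE_lborel_singleton)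
  moreover have "{..0} \<union> {0..} = (UNIV::real set)" by auto
  ultimately have "integral\<^sup>L lborel f = (LINT x:{..0}|lborel. f x) + (LINT x:{0..}|lborel. f x)"
    by (simp add: set_lebesgue_integral_def)
  with top bot show ?thesis by (simp add: algebra_simps)
qed



lemma hb_eq:
  fixes f g :: "'a \<Rightarrow> 'b::{banach,second_countable_topology}"
  shows "has_bochner_integral M f x \<Longrightarrow> (\<And>q. f q = g q) \<Longrightarrow> has_bochner_integral M g x"
proof -
  assume "has_bochner_integral M f x" "\<And>q. f q = g q"
  moreover have "f = g" using \<open>\<And>q. f q = g q\<close> by auto
  ultimately show ?thesis by simp
qed

lemma hb_Complex:
  fixes f g :: "'a \<Rightarrow> real"
  assumes "has_bochner_integral M f x" "has_bochner_integral M g y"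
  shows "has_bochner_integral M (\<lambda>q. Complex (f q) (g q)) (Complex x y)"
proof -
  have h: "has_bochner_integral M (\<lambda>q. complex_of_real (f q) + \<i> * complex_of_real (g q))
          (complex_of_real x + \<i> * complex_of_real y)"
    by (intro has_bochner_integral_add has_bochner_integral_mult_right
        has_bochner_integral_of_real assms)
  have e1: "complex_of_real x + \<i> * complex_of_real y = Complex x y"
    by (simp add: complex_eq_iff)
  have e2: "(\<lambda>q. complex_of_real (f q) + \<i> * complex_of_real (g q)) = (\<lambda>q. Complex (f q) (g q))"
    by (simp add: complex_eq_iff fun_eq_iff)
  show ?thesis using h unfolding e1 e2 .
qed

lemma CS_bochner:
  fixes u v :: "real \<Rightarrow> real"
  assumes A: "has_bochner_integral lborel (\<lambda>x. (u x)\<^sup>2) A"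
    and B: "has_bochner_integral lborel (\<lambda>x. u x * v x) B"
    and C: "has_bochner_integral lborel (\<lambda>x. (v x)\<^sup>2) C"
  shows "B\<^sup>2 \<le> A * C"
proof -
  have nn: "0 \<le> t\<^sup>2 * A + 2 * t * B + C" for t
  proof -
    have "has_bochner_integral lborel (\<lambda>x. t\<^sup>2 * (u x)\<^sup>2 + (2 * t) * (u x * v x) + (v x)\<^sup>2)
            (t\<^sup>2 * A + (2 * t) * B + C)"
      by (intro has_bochner_integral_add has_bochner_integral_mult_right A B C)
    then have h: "has_bochner_integral lborel (\<lambda>x. (t * u x + v x)\<^sup>2) (t\<^sup>2 * A + 2 * t * B + C)"
      by (rule hb_eq) (simp add: power2_eq_square algebra_simps)
    have "0 \<le> integral\<^sup>L lborel (\<lambda>x. (t * u x + v x)\<^sup>2)"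
      by (rule integral_nonneg_AE) simp
    then show ?thesis using has_bochner_integral_integral_eq[OF h] by simp
  qed
  have A0: "0 \<le> A"
  proof -
    have "0 \<le> integral\<^sup>L lborel (\<lambda>x. (u x)\<^sup>2)"
      by (rule integral_nonneg_AE) simp
    then show ?thesis using has_bochner_integral_integral_eq[OF A] by simp
  qed
  show ?thesis
  proof (cases "A = 0")
    case True
    show ?thesis
    proof (cases "B = 0")
      case False
      have "0 \<le> (-(C+1)/(2*B))\<^sup>2 * A + 2 * (-(C+1)/(2*B)) * B + C" by (rule nn)
      with True False show ?thesis by (simp add: field_simps)
    qed (simp add: True)
  next
    case False
    with A0 have Ap: "A > 0" by simp
    define t where "t = -B/A"
    have tA: "t * A = -B" using Ap by (simp add: t_def)
    have "0 \<le> t\<^sup>2 * A + 2 * t * B + C" by (rule nn)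
    also have "t\<^sup>2 * A + 2 * t * B + C = t * (t * A) + 2 * t * B + C"
      by (simp add: power2_eq_square mult.assoc)
    also have "\<dots> = t * B + C" unfolding tA by (simp add: algebra_simps)
    finally have h1: "0 \<le> t * B + C" .
    have "0 \<le> A * (t * B + C)" using h1 Ap by simp
    also have "A * (t * B + C) = (t * A) * B + A * C" by (simp add: algebra_simps)
    also have "\<dots> = A * C - B\<^sup>2" unfolding tA by (simp add: power2_eq_square)
    finally show ?thesis by simp
  qed
qed

definition ee :: "real \<Rightarrow> (real \<Rightarrow> real) \<Rightarrow> real \<Rightarrow> complex" where
  "ee hbar S q = exp (\<i> * complex_of_real (S q / hbar))"

definition dpsi :: "real \<Rightarrow> (real \<Rightarrow> real) \<Rightarrow> (real \<Rightarrow> real) \<Rightarrow> real \<Rightarrow> complex" where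
  "dpsi hbar \<Omega> S q = Complex (deriv \<Omega> q) (\<Omega> q * deriv S q / hbar) * ee hbar S q"

lemma cnj_ee: "cnj (ee hbar S q) * ee hbar S q = 1"
  unfolding ee_def by (simp add: exp_cnj exp_add[symmetric])

lemma norm_ee: "norm (ee hbar S q) = 1"
  unfolding ee_def by (simp add: norm_exp_i_times)

lemma wavefun_ee: "wavefun hbar \<Omega> S q = complex_of_real (\<Omega> q) * ee hbar S q"
  unfolding wavefun_def ee_def by simp

lemma ee_deriv:
  assumes "(S has_real_derivative s') (at q)"
  shows "(ee hbar S has_vector_derivative (Complex 0 (s' / hbar)) * ee hbar S q) (at q)"
proof -
  have 1: "((\<lambda>q. \<i> * complex_of_real (S q / hbar)) has_vector_derivative \<i> * complex_of_real (s' / hbar)) (at q)"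
    by (intro derivative_intros DERIV_cdivide assms)
  have 2: "((exp \<circ> (\<lambda>q. \<i> * complex_of_real (S q / hbar))) has_vector_derivative
          (\<i> * complex_of_real (s' / hbar)) * exp (\<i> * complex_of_real (S q / hbar))) (at q)"
    by (rule field_vector_diff_chain_at[OF 1 DERIV_exp])
  have eq: "\<i> * complex_of_real (s' / hbar) = Complex 0 (s' / hbar)"
    by (simp add: complex_eq_iff)
  show ?thesis unfolding ee_def[abs_def] using 2 unfolding o_def eq .
qed



lemma int_bound:
  fixes f g :: "real \<Rightarrow> real"
  assumes "integrable lborel g" "continuous_on UNIV f" "\<And>x. \<bar>f x\<bar> \<le> g x"
  shows "integrable lborel f"
proof (rule Bochner_Integration.integrable_bound[OF assms(1)])
  show "f \<in> borel_measurable lborel" using assms(2) by (simp add: borel_measurable_continuous_onI)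
  show "AE x in lborel. norm (f x) \<le> norm (g x)"
    using assms(3) by (auto intro!: AE_I2 order_trans[OF _ abs_ge_self])
qed

lemma abs_prod_le: "\<bar>(x::real) * y\<bar> \<le> x\<^sup>2 + y\<^sup>2"
proof -
  have "0 \<le> (\<bar>x\<bar> - \<bar>y\<bar>)\<^sup>2" by simp
  then have "2 * \<bar>x\<bar> * \<bar>y\<bar> \<le> x\<^sup>2 + y\<^sup>2" by (simp add: power2_eq_square algebra_simps)
  moreover have "\<bar>x\<bar> * \<bar>y\<bar> \<ge> 0" by simp
  moreover have "\<bar>x * y\<bar> = \<bar>x\<bar> * \<bar>y\<bar>" by (simp add: abs_mult)
  ultimately show ?thesis by linarith
qed

lemma cnj_e_mult: "cnj (x * ee h S q) * (y * ee h S q) = cnj x * y"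
proof -
  have "cnj (x * ee h S q) * (y * ee h S q) = cnj x * y * (cnj (ee h S q) * ee h S q)"
    by (simp add: mult_ac)
  then show ?thesis by (simp add: cnj_ee)
qed

lemma integrable_Complex:
  fixes f g :: "'a \<Rightarrow> real"
  shows "integrable M f \<Longrightarrow> integrable M g \<Longrightarrow> integrable M (\<lambda>q. Complex (f q) (g q))"
  by (rule integrable.intros[OF hb_Complex[OF has_bochner_integral_integrable has_bochner_integral_integrable]])

locale smooth_st =
  fixes hbar :: real and \<Omega> S :: "real \<Rightarrow> real"
  assumes dOa: "\<And>q. \<Omega> differentiable at q" and ddOa: "\<And>q. deriv \<Omega> differentiable at q"
    and dSa: "\<And>q. S differentiable at q" and ddSa: "\<And>q. deriv S differentiable at q"
begin

lemma dO: "(\<Omega> has_real_derivative deriv \<Omega> q) (at q)"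
  using dOa by (simp add: DERIV_deriv_iff_real_differentiable)
lemma ddO: "(deriv \<Omega> has_real_derivative deriv (deriv \<Omega>) q) (at q)"
  using ddOa by (simp add: DERIV_deriv_iff_real_differentiable)
lemma dS: "(S has_real_derivative deriv S q) (at q)"
  using dSa by (simp add: DERIV_deriv_iff_real_differentiable)
lemma ddS: "(deriv S has_real_derivative deriv (deriv S) q) (at q)"
  using ddSa by (simp add: DERIV_deriv_iff_real_differentiable)

lemma contO: "continuous_on UNIV \<Omega>"
  by (rule continuous_at_imp_continuous_on) (auto intro: DERIV_isCont[OF dO])
lemma contdO: "continuous_on UNIV (deriv \<Omega>)"
  by (rule continuous_at_imp_continuous_on) (auto intro: DERIV_isCont[OF ddO])
lemma contdS: "continuous_on UNIV (deriv S)"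
  by (rule continuous_at_imp_continuous_on) (auto intro: DERIV_isCont[OF ddS])

lemma dpsi_has: "(wavefun hbar \<Omega> S has_vector_derivative dpsi hbar \<Omega> S q) (at q)"
proof -
  have wf: "wavefun hbar \<Omega> S = (\<lambda>q. complex_of_real (\<Omega> q) * ee hbar S q)"
    by (rule ext) (simp add: wavefun_ee)
  have h: "((\<lambda>q. complex_of_real (\<Omega> q) * ee hbar S q) has_vector_derivative
     (complex_of_real (\<Omega> q) * (Complex 0 (deriv S q / hbar) * ee hbar S q)
       + complex_of_real (deriv \<Omega> q) * ee hbar S q)) (at q)"
    by (intro has_vector_derivative_mult has_vector_derivative_of_real dO ee_deriv dS)
  have c: "Complex (deriv \<Omega> q) (\<Omega> q * deriv S q / hbar)
      = complex_of_real (\<Omega> q) * Complex 0 (deriv S q / hbar) + complex_of_real (deriv \<Omega> q)"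
    by (simp add: complex_eq_iff)
  have "complex_of_real (\<Omega> q) * (Complex 0 (deriv S q / hbar) * ee hbar S q)
       + complex_of_real (deriv \<Omega> q) * ee hbar S q = dpsi hbar \<Omega> S q"
    unfolding dpsi_def c by (simp only: distrib_right mult.assoc)
  with h show ?thesis unfolding wf by simp
qed

lemma dpsi_diff: "\<exists>D. (dpsi hbar \<Omega> S has_vector_derivative D) (at q)"
proof -
  have e: "dpsi hbar \<Omega> S = (\<lambda>q. (complex_of_real (deriv \<Omega> q)
             + \<i> * complex_of_real (\<Omega> q * deriv S q / hbar)) * ee hbar S q)"
    by (rule ext) (simp add: dpsi_def complex_eq_iff)
  have d1: "((\<lambda>q. complex_of_real (deriv \<Omega> q)) has_vector_derivative
      complex_of_real (deriv (deriv \<Omega>) q)) (at q)"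
    by (rule has_vector_derivative_of_real[OF ddO])
  note d2r = DERIV_cdivide[OF DERIV_mult[OF dO ddS], of hbar]
  note d2 = has_vector_derivative_mult_right[OF has_vector_derivative_of_real[OF d2r], of \<i>]
  note d12 = has_vector_derivative_add[OF d1 d2]
  note fin = has_vector_derivative_mult[OF d12 ee_deriv[OF dS]]
  show ?thesis unfolding e using fin by blast
qed

lemma ddpsi_has: "(dpsi hbar \<Omega> S has_vector_derivative vector_derivative (dpsi hbar \<Omega> S) (at q)) (at q)"
proof -
  obtain D where "(dpsi hbar \<Omega> S has_vector_derivative D) (at q)" using dpsi_diff[of q] by blast
  then have "dpsi hbar \<Omega> S differentiable (at q)" by (rule differentiableI_vector)
  then show ?thesis by (simp add: vector_derivative_works)
qed

lemma cont_psi: "continuous_on UNIV (wavefun hbar \<Omega> S)"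
  by (rule continuous_on_vector_derivative) (rule has_vector_derivative_at_within[OF dpsi_has])
lemma cont_dpsi: "continuous_on UNIV (dpsi hbar \<Omega> S)"
  by (rule continuous_on_vector_derivative) (rule has_vector_derivative_at_within[OF ddpsi_has])

lemma vd_psi: "vector_derivative (wavefun hbar \<Omega> S) (at q) = dpsi hbar \<Omega> S q"
  by (rule vector_derivative_at[OF dpsi_has])

lemma pop_psi: "pop hbar (wavefun hbar \<Omega> S) = (\<lambda>q. - \<i> * complex_of_real hbar * dpsi hbar \<Omega> S q)"
  by (rule ext) (simp add: pop_def vd_psi)

lemma popop: "pop hbar (pop hbar (wavefun hbar \<Omega> S)) q
    = - complex_of_real (hbar\<^sup>2) * vector_derivative (dpsi hbar \<Omega> S) (at q)"
proof -
  have "vector_derivative (pop hbar (wavefun hbar \<Omega> S)) (at q)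
     = - \<i> * complex_of_real hbar * vector_derivative (dpsi hbar \<Omega> S) (at q)"
    unfolding pop_psi
    by (rule vector_derivative_at[OF has_vector_derivative_mult_right[OF ddpsi_has]])
  then show ?thesis by (simp add: pop_def power2_eq_square complex_eq_iff algebra_simps)
qed

lemma pop_qop: "pop hbar (qop (wavefun hbar \<Omega> S)) q
    = - \<i> * complex_of_real hbar * (complex_of_real q * dpsi hbar \<Omega> S q + wavefun hbar \<Omega> S q)"
proof -
  have e: "qop (wavefun hbar \<Omega> S) = (\<lambda>q. complex_of_real q * wavefun hbar \<Omega> S q)"
    by (rule ext) (simp add: qop_def)
  have "((\<lambda>q. complex_of_real q * wavefun hbar \<Omega> S q) has_vector_derivative
      complex_of_real q * dpsi hbar \<Omega> S q + complex_of_real 1 * wavefun hbar \<Omega> S q) (at q)"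
    by (intro has_vector_derivative_mult has_vector_derivative_of_real DERIV_ident dpsi_has)
  then have "vector_derivative (qop (wavefun hbar \<Omega> S)) (at q) = 
      complex_of_real q * dpsi hbar \<Omega> S q + wavefun hbar \<Omega> S q"
    unfolding e by (simp add: vector_derivative_at)
  then show ?thesis by (simp add: pop_def)
qed

lemma pw_psi_psi: "cnj (wavefun hbar \<Omega> S q) * wavefun hbar \<Omega> S q = complex_of_real ((\<Omega> q)\<^sup>2)"
  unfolding wavefun_ee cnj_e_mult by (simp add: power2_eq_square)

lemma pw_psi_dpsi: "cnj (wavefun hbar \<Omega> S q) * dpsi hbar \<Omega> S q
   = Complex (\<Omega> q * deriv \<Omega> q) ((\<Omega> q)\<^sup>2 * deriv S q / hbar)"
  unfolding wavefun_ee dpsi_def cnj_e_mult by (simp add: complex_eq_iff power2_eq_square)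

lemma pw_dpsi_dpsi: "cnj (dpsi hbar \<Omega> S q) * dpsi hbar \<Omega> S q
   = complex_of_real ((deriv \<Omega> q)\<^sup>2 + (\<Omega> q * deriv S q / hbar)\<^sup>2)"
  unfolding dpsi_def cnj_e_mult by (simp add: complex_eq_iff power2_eq_square)

lemma norm_dpsi: "(norm (dpsi hbar \<Omega> S q))\<^sup>2 = (deriv \<Omega> q)\<^sup>2 + (\<Omega> q * deriv S q / hbar)\<^sup>2"
  unfolding dpsi_def norm_mult norm_ee by (simp add: cmod_power2)


lemma ddpsi_eq: "vector_derivative (dpsi hbar \<Omega> S) (at q) =
   (complex_of_real (deriv \<Omega> q) + \<i> * complex_of_real (\<Omega> q * deriv S q / hbar))
      * (Complex 0 (deriv S q / hbar) * ee hbar S q)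
   + (complex_of_real (deriv (deriv \<Omega>) q)
      + \<i> * complex_of_real ((deriv \<Omega> q * deriv S q + deriv (deriv S) q * \<Omega> q) / hbar)) * ee hbar S q"
proof -
  have e: "dpsi hbar \<Omega> S = (\<lambda>q. (complex_of_real (deriv \<Omega> q)
             + \<i> * complex_of_real (\<Omega> q * deriv S q / hbar)) * ee hbar S q)"
    by (rule ext) (simp add: dpsi_def complex_eq_iff)
  have d1: "((\<lambda>q. complex_of_real (deriv \<Omega> q)) has_vector_derivative
      complex_of_real (deriv (deriv \<Omega>) q)) (at q)"
    by (rule has_vector_derivative_of_real[OF ddO])
  note d2r = DERIV_cdivide[OF DERIV_mult[OF dO ddS], of hbar]
  note d2 = has_vector_derivative_mult_right[OF has_vector_derivative_of_real[OF d2r], of \<i>]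
  note d12 = has_vector_derivative_add[OF d1 d2]
  note fin = has_vector_derivative_mult[OF d12 ee_deriv[OF dS]]
  show ?thesis unfolding e by (rule vector_derivative_at[OF fin])
qed

lemma pp_pw: "hbar \<noteq> 0 \<Longrightarrow> cnj (wavefun hbar \<Omega> S q) * pop hbar (pop hbar (wavefun hbar \<Omega> S)) q
  = Complex (- hbar\<^sup>2 * (\<Omega> q * deriv (deriv \<Omega>) q) + (\<Omega> q)\<^sup>2 * (deriv S q)\<^sup>2)
      (- hbar * (2 * (\<Omega> q * deriv \<Omega> q * deriv S q) + (\<Omega> q)\<^sup>2 * deriv (deriv S) q))"
proof -
  assume h: "hbar \<noteq> 0"
  define X where "X = (complex_of_real (deriv \<Omega> q) + \<i> * complex_of_real (\<Omega> q * deriv S q / hbar))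
      * Complex 0 (deriv S q / hbar)
   + (complex_of_real (deriv (deriv \<Omega>) q)
      + \<i> * complex_of_real ((deriv \<Omega> q * deriv S q + deriv (deriv S) q * \<Omega> q) / hbar))"
  have "vector_derivative (dpsi hbar \<Omega> S) (at q) = X * ee hbar S q"
    unfolding ddpsi_eq X_def by (simp only: distrib_right mult.assoc)
  then have "cnj (wavefun hbar \<Omega> S q) * pop hbar (pop hbar (wavefun hbar \<Omega> S)) q
     = - complex_of_real (hbar\<^sup>2) * (cnj (complex_of_real (\<Omega> q) * ee hbar S q) * (X * ee hbar S q))"
    unfolding popop wavefun_ee by (simp only: mult_ac)
  also have "\<dots> = - complex_of_real (hbar\<^sup>2) * (complex_of_real (\<Omega> q) * X)"
    unfolding cnj_e_mult by simp
  also have "\<dots> = Complex (- hbar\<^sup>2 * (\<Omega> q * deriv (deriv \<Omega>) q) + (\<Omega> q)\<^sup>2 * (deriv S q)\<^sup>2)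
      (- hbar * (2 * (\<Omega> q * deriv \<Omega> q * deriv S q) + (\<Omega> q)\<^sup>2 * deriv (deriv S) q))"
    unfolding X_def using h by (simp add: complex_eq_iff field_simps power2_eq_square)
  finally show ?thesis .
qed

lemma pp_int_crit:
  assumes "hbar \<noteq> 0" "integrable lborel (\<lambda>q. \<Omega> q * deriv (deriv \<Omega>) q)"
    "integrable lborel (\<lambda>q. (\<Omega> q)\<^sup>2 * (deriv S q)\<^sup>2)"
    "integrable lborel (\<lambda>q. \<Omega> q * deriv \<Omega> q * deriv S q)"
    "integrable lborel (\<lambda>q. (\<Omega> q)\<^sup>2 * deriv (deriv S) q)"
  shows "integrable lborel (\<lambda>q. cnj (wavefun hbar \<Omega> S q) * pop hbar (pop hbar (wavefun hbar \<Omega> S)) q)"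
proof -
  have "integrable lborel (\<lambda>q. Complex (- hbar\<^sup>2 * (\<Omega> q * deriv (deriv \<Omega>) q) + (\<Omega> q)\<^sup>2 * (deriv S q)\<^sup>2)
      (- hbar * (2 * (\<Omega> q * deriv \<Omega> q * deriv S q) + (\<Omega> q)\<^sup>2 * deriv (deriv S) q)))"
    by (intro integrable_Complex Bochner_Integration.integrable_add integrable_mult_right assms(2-5))
  then show ?thesis using pp_pw[OF assms(1)] by simp
qed

end

locale adm_st =
  fixes hbar :: real and \<Omega> S :: "real \<Rightarrow> real"
  assumes hb: "hbar > 0" and adm: "admissible hbar \<Omega> S"

sublocale adm_st \<subseteq> smooth_st
  using adm unfolding admissible_def by unfold_locales auto

context adm_st
begin

lemma hb_a2: "has_bochner_integral lborel (\<lambda>q. (\<Omega> q)\<^sup>2) 1"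
  using adm unfolding admissible_def by simp
lemma I_a2: "integrable lborel (\<lambda>q. (\<Omega> q)\<^sup>2)"
  using hb_a2 by (rule integrable.intros)
lemma I_q2a2: "integrable lborel (\<lambda>q. q\<^sup>2 * (\<Omega> q)\<^sup>2)"
  using adm unfolding admissible_def by simp


lemma I_nd: "integrable lborel (\<lambda>q. (deriv \<Omega> q)\<^sup>2 + (\<Omega> q * deriv S q / hbar)\<^sup>2)"
proof -
  have "integrable lborel (\<lambda>q. (norm (vector_derivative (wavefun hbar \<Omega> S) (at q)))\<^sup>2)"
    using adm unfolding admissible_def by simp
  then show ?thesis by (simp add: vd_psi norm_dpsi)
qed

lemma I_dO2: "integrable lborel (\<lambda>q. (deriv \<Omega> q)\<^sup>2)"
  by (rule int_bound[OF I_nd]) (auto intro!: continuous_intros contdO)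

lemma I_aS: "integrable lborel (\<lambda>q. (\<Omega> q)\<^sup>2 * (deriv S q)\<^sup>2)"
proof (rule int_bound[OF integrable_mult_right[OF I_nd, of "hbar\<^sup>2"]])
  show "continuous_on UNIV (\<lambda>q. (\<Omega> q)\<^sup>2 * (deriv S q)\<^sup>2)"
    by (intro continuous_intros contO contdS)
  fix q
  have "(\<Omega> q)\<^sup>2 * (deriv S q)\<^sup>2 = hbar\<^sup>2 * (\<Omega> q * deriv S q / hbar)\<^sup>2"
    using hb by (simp add: power_divide power_mult_distrib)
  then show "\<bar>(\<Omega> q)\<^sup>2 * (deriv S q)\<^sup>2\<bar> \<le> hbar\<^sup>2 * ((deriv \<Omega> q)\<^sup>2 + (\<Omega> q * deriv S q / hbar)\<^sup>2)"
    by (simp add: distrib_left)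
qed

lemma I_qa2: "integrable lborel (\<lambda>q. q * (\<Omega> q)\<^sup>2)"
proof (rule int_bound[OF Bochner_Integration.integrable_add[OF I_q2a2 I_a2]])
  show "continuous_on UNIV (\<lambda>q. q * (\<Omega> q)\<^sup>2)" by (intro continuous_intros contO)
  fix q show "\<bar>q * (\<Omega> q)\<^sup>2\<bar> \<le> q\<^sup>2 * (\<Omega> q)\<^sup>2 + (\<Omega> q)\<^sup>2"
    using abs_prod_le[of "q * \<Omega> q" "\<Omega> q"] by (simp add: power2_eq_square mult_ac)
qed

lemma I_aa: "integrable lborel (\<lambda>q. \<Omega> q * deriv \<Omega> q)"
proof (rule int_bound[OF Bochner_Integration.integrable_add[OF I_a2 I_dO2]])
  show "continuous_on UNIV (\<lambda>q. \<Omega> q * deriv \<Omega> q)" by (intro continuous_intros contO contdO)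
  fix q show "\<bar>\<Omega> q * deriv \<Omega> q\<bar> \<le> (\<Omega> q)\<^sup>2 + (deriv \<Omega> q)\<^sup>2"
    using abs_prod_le[of "\<Omega> q" "deriv \<Omega> q"] by simp
qed

lemma I_qaa: "integrable lborel (\<lambda>q. q * \<Omega> q * deriv \<Omega> q)"
proof (rule int_bound[OF Bochner_Integration.integrable_add[OF I_q2a2 I_dO2]])
  show "continuous_on UNIV (\<lambda>q. q * \<Omega> q * deriv \<Omega> q)" by (intro continuous_intros contO contdO)
  fix q show "\<bar>q * \<Omega> q * deriv \<Omega> q\<bar> \<le> q\<^sup>2 * (\<Omega> q)\<^sup>2 + (deriv \<Omega> q)\<^sup>2"
    using abs_prod_le[of "q * \<Omega> q" "deriv \<Omega> q"] by (simp add: power_mult_distrib)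
qed

lemma I_a2s: "integrable lborel (\<lambda>q. (\<Omega> q)\<^sup>2 * deriv S q)"
proof (rule int_bound[OF Bochner_Integration.integrable_add[OF I_a2 I_aS]])
  show "continuous_on UNIV (\<lambda>q. (\<Omega> q)\<^sup>2 * deriv S q)" by (intro continuous_intros contO contdS)
  fix q show "\<bar>(\<Omega> q)\<^sup>2 * deriv S q\<bar> \<le> (\<Omega> q)\<^sup>2 + (\<Omega> q)\<^sup>2 * (deriv S q)\<^sup>2"
    using abs_prod_le[of "\<Omega> q" "\<Omega> q * deriv S q"] by (simp add: power2_eq_square mult_ac)
qed

lemma I_qa2s: "integrable lborel (\<lambda>q. q * (\<Omega> q)\<^sup>2 * deriv S q)"
proof (rule int_bound[OF Bochner_Integration.integrable_add[OF I_q2a2 I_aS]])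
  show "continuous_on UNIV (\<lambda>q. q * (\<Omega> q)\<^sup>2 * deriv S q)" by (intro continuous_intros contO contdS)
  fix q show "\<bar>q * (\<Omega> q)\<^sup>2 * deriv S q\<bar> \<le> q\<^sup>2 * (\<Omega> q)\<^sup>2 + (\<Omega> q)\<^sup>2 * (deriv S q)\<^sup>2"
    using abs_prod_le[of "q * \<Omega> q" "\<Omega> q * deriv S q"] by (simp add: power2_eq_square mult_ac)
qed

lemma Z1: "(LINT q|lborel. \<Omega> q * deriv \<Omega> q) = 0"
proof -
  have D: "((\<lambda>q. complex_of_real ((\<Omega> q * \<Omega> q) / 2)) has_vector_derivative
      complex_of_real (\<Omega> q * deriv \<Omega> q)) (at q)" for q
    by (intro has_vector_derivative_of_real DERIV_cong[OF DERIV_cdivide[OF DERIV_mult[OF dO dO]]])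
       (simp add: algebra_simps)
  have "integrable lborel (\<lambda>q. (\<Omega> q * \<Omega> q) / 2)"
    using I_a2 by (simp add: power2_eq_square)
  then have "integral\<^sup>L lborel (\<lambda>q. complex_of_real (\<Omega> q * deriv \<Omega> q)) = 0"
    by (intro integral_deriv_zero[OF D] integrable_of_real I_aa)
  then show ?thesis by (simp only: integral_complex_of_real of_real_eq_0_iff)
qed

lemma Z2: "(LINT q|lborel. (\<Omega> q)\<^sup>2 + 2 * (q * \<Omega> q * deriv \<Omega> q)) = 0"
proof -
  have D: "((\<lambda>q. complex_of_real (q * (\<Omega> q * \<Omega> q))) has_vector_derivative
      complex_of_real ((\<Omega> q)\<^sup>2 + 2 * (q * \<Omega> q * deriv \<Omega> q))) (at q)" for q
    by (intro has_vector_derivative_of_real DERIV_cong[OF DERIV_mult[OF DERIV_ident DERIV_mult[OF dO dO]]])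
       (simp add: algebra_simps power2_eq_square)
  have "integrable lborel (\<lambda>q. q * (\<Omega> q * \<Omega> q))"
    using I_qa2 by (simp add: power2_eq_square)
  moreover have "integrable lborel (\<lambda>q. (\<Omega> q)\<^sup>2 + 2 * (q * \<Omega> q * deriv \<Omega> q))"
    by (intro Bochner_Integration.integrable_add integrable_mult_right I_a2 I_qaa)
  ultimately have "integral\<^sup>L lborel (\<lambda>q. complex_of_real ((\<Omega> q)\<^sup>2 + 2 * (q * \<Omega> q * deriv \<Omega> q))) = 0"
    by (intro integral_deriv_zero[OF D] integrable_of_real)
  then show ?thesis by (simp only: integral_complex_of_real of_real_eq_0_iff)
qed


lemma E_q: "expect (wavefun hbar \<Omega> S) qop = complex_of_real (LINT q|lborel. q * (\<Omega> q)\<^sup>2)"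
proof -
  have eq: "(\<lambda>q. cnj (wavefun hbar \<Omega> S q) * qop (wavefun hbar \<Omega> S) q)
      = (\<lambda>q. complex_of_real (q * (\<Omega> q)\<^sup>2))"
  proof
    fix q
    have "cnj (wavefun hbar \<Omega> S q) * qop (wavefun hbar \<Omega> S) q
       = complex_of_real q * (cnj (wavefun hbar \<Omega> S q) * wavefun hbar \<Omega> S q)"
      by (simp add: qop_def mult_ac)
    then show "cnj (wavefun hbar \<Omega> S q) * qop (wavefun hbar \<Omega> S) q = complex_of_real (q * (\<Omega> q)\<^sup>2)"
      by (simp add: pw_psi_psi)
  qed
  show ?thesis unfolding expect_def eq by (rule integral_complex_of_real)
qed

lemma E_qq: "expect (wavefun hbar \<Omega> S) (\<lambda>f. qop (qop f)) = complex_of_real (LINT q|lborel. q\<^sup>2 * (\<Omega> q)\<^sup>2)"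
proof -
  have eq: "(\<lambda>q. cnj (wavefun hbar \<Omega> S q) * qop (qop (wavefun hbar \<Omega> S)) q)
      = (\<lambda>q. complex_of_real (q\<^sup>2 * (\<Omega> q)\<^sup>2))"
  proof
    fix q
    have "cnj (wavefun hbar \<Omega> S q) * qop (qop (wavefun hbar \<Omega> S)) q
       = complex_of_real (q * q) * (cnj (wavefun hbar \<Omega> S q) * wavefun hbar \<Omega> S q)"
      by (simp add: qop_def mult_ac)
    then show "cnj (wavefun hbar \<Omega> S q) * qop (qop (wavefun hbar \<Omega> S)) q = complex_of_real (q\<^sup>2 * (\<Omega> q)\<^sup>2)"
      by (simp add: pw_psi_psi power2_eq_square)
  qed
  show ?thesis unfolding expect_def eq by (rule integral_complex_of_real)
qed

lemma mi_Complex: "- \<i> * complex_of_real h * Complex x y = Complex (h * y) (- h * x)"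
  by (simp add: complex_eq_iff)

lemma E_p: "expect (wavefun hbar \<Omega> S) (pop hbar) = complex_of_real (LINT q|lborel. (\<Omega> q)\<^sup>2 * deriv S q)"
proof -
  have eq: "(\<lambda>q. cnj (wavefun hbar \<Omega> S q) * pop hbar (wavefun hbar \<Omega> S) q)
      = (\<lambda>q. Complex ((\<Omega> q)\<^sup>2 * deriv S q) (- hbar * (\<Omega> q * deriv \<Omega> q)))"
  proof
    fix q
    have "cnj (wavefun hbar \<Omega> S q) * pop hbar (wavefun hbar \<Omega> S) q
       = cnj (wavefun hbar \<Omega> S q) * (- \<i> * complex_of_real hbar * dpsi hbar \<Omega> S q)"
      by (simp only: pop_psi)
    also have "\<dots> = - \<i> * complex_of_real hbar * (cnj (wavefun hbar \<Omega> S q) * dpsi hbar \<Omega> S q)"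
      by (simp only: mult_ac)
    also have "\<dots> = Complex (hbar * ((\<Omega> q)\<^sup>2 * deriv S q / hbar)) (- hbar * (\<Omega> q * deriv \<Omega> q))"
      by (simp only: pw_psi_dpsi mi_Complex)
    also have "hbar * ((\<Omega> q)\<^sup>2 * deriv S q / hbar) = (\<Omega> q)\<^sup>2 * deriv S q"
      using hb by simp
    finally show "cnj (wavefun hbar \<Omega> S q) * pop hbar (wavefun hbar \<Omega> S) q
        = Complex ((\<Omega> q)\<^sup>2 * deriv S q) (- hbar * (\<Omega> q * deriv \<Omega> q))" .
  qed
  have "has_bochner_integral lborel
     (\<lambda>q. Complex ((\<Omega> q)\<^sup>2 * deriv S q) (- hbar * (\<Omega> q * deriv \<Omega> q)))
     (Complex (LINT q|lborel. (\<Omega> q)\<^sup>2 * deriv S q) (- hbar * (LINT q|lborel. \<Omega> q * deriv \<Omega> q)))"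
    by (intro hb_Complex has_bochner_integral_mult_right has_bochner_integral_integrable I_a2s I_aa)
  then have "expect (wavefun hbar \<Omega> S) (pop hbar)
     = Complex (LINT q|lborel. (\<Omega> q)\<^sup>2 * deriv S q) (- hbar * (LINT q|lborel. \<Omega> q * deriv \<Omega> q))"
    unfolding expect_def eq by (rule has_bochner_integral_integral_eq)
  then have "expect (wavefun hbar \<Omega> S) (pop hbar) = Complex (LINT q|lborel. (\<Omega> q)\<^sup>2 * deriv S q) 0"
    by (simp only: Z1 mult_zero_right)
  also have "Complex (LINT q|lborel. (\<Omega> q)\<^sup>2 * deriv S q) 0 = complex_of_real (LINT q|lborel. (\<Omega> q)\<^sup>2 * deriv S q)"
    by (rule complex_eqI) simp_all
  finally show ?thesis .
qed

lemma norm_psi: "norm (wavefun hbar \<Omega> S q) = \<bar>\<Omega> q\<bar>"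
  unfolding wavefun_ee norm_mult norm_ee by simp

lemma E_pp: "expect (wavefun hbar \<Omega> S) (\<lambda>f. pop hbar (pop hbar f))
   = complex_of_real (hbar\<^sup>2 * (LINT q|lborel. (deriv \<Omega> q)\<^sup>2)
        + (LINT q|lborel. (\<Omega> q)\<^sup>2 * (deriv S q)\<^sup>2))"
proof -
  define \<psi> where "\<psi> = wavefun hbar \<Omega> S"
  define d where "d = dpsi hbar \<Omega> S"
  define dd where "dd = (\<lambda>q. vector_derivative (dpsi hbar \<Omega> S) (at q))"
  define Nd where "Nd = (\<lambda>q. (deriv \<Omega> q)\<^sup>2 + (\<Omega> q * deriv S q / hbar)\<^sup>2)"
  have given: "integrable lborel (\<lambda>q. cnj (\<psi> q) * pop hbar (pop hbar \<psi>) q)"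
    using adm unfolding admissible_def \<psi>_def by simp
  have hne: "complex_of_real (hbar\<^sup>2) \<noteq> 0" using hb by simp
  have Idd: "integrable lborel (\<lambda>q. cnj (\<psi> q) * dd q)"
  proof -
    have "integrable lborel (\<lambda>q. (- 1 / complex_of_real (hbar\<^sup>2)) * (cnj (\<psi> q) * pop hbar (pop hbar \<psi>) q))"
      by (rule integrable_mult_right[OF given])
    moreover have "(\<lambda>q. (- 1 / complex_of_real (hbar\<^sup>2)) * (cnj (\<psi> q) * pop hbar (pop hbar \<psi>) q))
        = (\<lambda>q. cnj (\<psi> q) * dd q)"
      unfolding \<psi>_def popop dd_def using hne by (simp add: field_simps fun_eq_iff)
    ultimately show ?thesis by (simp only:)
  qed
  have INd: "integrable lborel (\<lambda>q. complex_of_real (Nd q))"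
    unfolding Nd_def by (intro integrable_of_real I_nd)
  have pw: "cnj (d q) * d q = complex_of_real (Nd q)" for q
    unfolding d_def Nd_def by (rule pw_dpsi_dpsi)
  have D: "((\<lambda>q. cnj (\<psi> q) * d q) has_vector_derivative (cnj (\<psi> q) * dd q + cnj (d q) * d q)) (at q)" for q
    unfolding \<psi>_def d_def dd_def
    by (intro has_vector_derivative_mult has_vector_derivative_cnj dpsi_has ddpsi_has)
  have IF: "integrable lborel (\<lambda>q. cnj (\<psi> q) * d q)"
  proof (rule Bochner_Integration.integrable_bound[of _ "\<lambda>q. (\<Omega> q)\<^sup>2 + Nd q"])
    show "integrable lborel (\<lambda>q. (\<Omega> q)\<^sup>2 + Nd q)"
      unfolding Nd_def by (intro Bochner_Integration.integrable_add I_a2 I_nd)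
    have "continuous_on UNIV (\<lambda>q. cnj (\<psi> q) * d q)"
      unfolding \<psi>_def d_def by (intro continuous_intros cont_psi cont_dpsi)
    then show "(\<lambda>q. cnj (\<psi> q) * d q) \<in> borel_measurable lborel"
      by (simp add: borel_measurable_continuous_onI)
    show "AE x in lborel. norm (cnj (\<psi> x) * d x) \<le> norm ((\<Omega> x)\<^sup>2 + Nd x)"
    proof (rule AE_I2)
      fix x
      have "norm (cnj (\<psi> x) * d x) = \<bar>\<Omega> x * norm (d x)\<bar>"
        unfolding \<psi>_def by (simp add: norm_mult norm_psi abs_mult)
      also have "\<dots> \<le> (\<Omega> x)\<^sup>2 + (norm (d x))\<^sup>2" by (rule abs_prod_le)
      also have "(norm (d x))\<^sup>2 = Nd x" unfolding d_def Nd_def by (rule norm_dpsi)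
      also have "(\<Omega> x)\<^sup>2 + Nd x \<le> norm ((\<Omega> x)\<^sup>2 + Nd x)" by simp
      finally show "norm (cnj (\<psi> x) * d x) \<le> norm ((\<Omega> x)\<^sup>2 + Nd x)" .
    qed
  qed
  have If: "integrable lborel (\<lambda>q. cnj (\<psi> q) * dd q + cnj (d q) * d q)"
    unfolding pw by (intro Bochner_Integration.integrable_add Idd INd)
  have "integral\<^sup>L lborel (\<lambda>q. cnj (\<psi> q) * dd q + cnj (d q) * d q) = 0"
    by (rule integral_deriv_zero[OF D If IF])
  then have "integral\<^sup>L lborel (\<lambda>q. cnj (\<psi> q) * dd q) + integral\<^sup>L lborel (\<lambda>q. complex_of_real (Nd q)) = 0"
    unfolding pw by (simp add: Bochner_Integration.integral_add[OF Idd INd])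
  then have I1: "integral\<^sup>L lborel (\<lambda>q. cnj (\<psi> q) * dd q) = - complex_of_real (integral\<^sup>L lborel Nd)"
    by (simp add: eq_neg_iff_add_eq_0)
  have INd2: "integral\<^sup>L lborel Nd = (LINT q|lborel. (deriv \<Omega> q)\<^sup>2)
      + (LINT q|lborel. (\<Omega> q)\<^sup>2 * (deriv S q)\<^sup>2) / hbar\<^sup>2"
  proof -
    have "Nd = (\<lambda>q. (deriv \<Omega> q)\<^sup>2 + (\<Omega> q)\<^sup>2 * (deriv S q)\<^sup>2 / hbar\<^sup>2)"
      unfolding Nd_def by (simp add: fun_eq_iff power_divide power_mult_distrib)
    then show ?thesis
      by (simp add: Bochner_Integration.integral_add[OF I_dO2 integrable_divide_zero[OF I_aS]])
  qed
  have "expect (wavefun hbar \<Omega> S) (\<lambda>f. pop hbar (pop hbar f))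
     = integral\<^sup>L lborel (\<lambda>q. - complex_of_real (hbar\<^sup>2) * (cnj (\<psi> q) * dd q))"
    unfolding expect_def \<psi>_def dd_def popop by (simp add: mult_ac)
  also have "\<dots> = - complex_of_real (hbar\<^sup>2) * integral\<^sup>L lborel (\<lambda>q. cnj (\<psi> q) * dd q)"
    by (rule integral_mult_right_zero)
  also have "\<dots> = complex_of_real (hbar\<^sup>2 * integral\<^sup>L lborel Nd)"
    unfolding I1 by simp
  also have "hbar\<^sup>2 * integral\<^sup>L lborel Nd = hbar\<^sup>2 * (LINT q|lborel. (deriv \<Omega> q)\<^sup>2)
        + (LINT q|lborel. (\<Omega> q)\<^sup>2 * (deriv S q)\<^sup>2)"
    unfolding INd2 using hb by (simp add: field_simps)
  finally show ?thesis .
qed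

lemma cov_pw_alg: "h \<noteq> 0 \<Longrightarrow> - \<i> * complex_of_real h * (2 * complex_of_real q * Complex x (y / h) + complex_of_real z)
   = Complex (2 * q * y) (- h * (z + 2 * q * x))"
  by (simp add: complex_eq_iff field_simps)

lemma ring1: "(c::complex) * (r * (- \<i> * h * d) + - \<i> * h * (r * d + p)) = - \<i> * h * (2 * r * (c * d) + c * p)"
  by (simp add: algebra_simps)

lemma E_cov: "expect (wavefun hbar \<Omega> S) (\<lambda>f q. qop (pop hbar f) q + pop hbar (qop f) q)
   = complex_of_real (2 * (LINT q|lborel. q * (\<Omega> q)\<^sup>2 * deriv S q))"
proof -
  define \<psi> where "\<psi> = wavefun hbar \<Omega> S"
  have eq: "(\<lambda>q. cnj (\<psi> q) * (qop (pop hbar \<psi>) q + pop hbar (qop \<psi>) q))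
     = (\<lambda>q. Complex (2 * q * ((\<Omega> q)\<^sup>2 * deriv S q)) (- hbar * ((\<Omega> q)\<^sup>2 + 2 * q * (\<Omega> q * deriv \<Omega> q))))"
  proof
    fix q
    have "cnj (\<psi> q) * (qop (pop hbar \<psi>) q + pop hbar (qop \<psi>) q)
       = cnj (\<psi> q) * (complex_of_real q * (- \<i> * complex_of_real hbar * dpsi hbar \<Omega> S q)
          + - \<i> * complex_of_real hbar * (complex_of_real q * dpsi hbar \<Omega> S q + \<psi> q))"
      unfolding \<psi>_def pop_qop by (simp only: qop_def pop_psi)
    also have "\<dots> = - \<i> * complex_of_real hbar * (2 * complex_of_real q * (cnj (\<psi> q) * dpsi hbar \<Omega> S q)
          + cnj (\<psi> q) * \<psi> q)"
      by (rule ring1)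
    also have "\<dots> = - \<i> * complex_of_real hbar * (2 * complex_of_real q *
          Complex (\<Omega> q * deriv \<Omega> q) ((\<Omega> q)\<^sup>2 * deriv S q / hbar) + complex_of_real ((\<Omega> q)\<^sup>2))"
      unfolding \<psi>_def pw_psi_dpsi pw_psi_psi ..
    also have "\<dots> = Complex (2 * q * ((\<Omega> q)\<^sup>2 * deriv S q)) (- hbar * ((\<Omega> q)\<^sup>2 + 2 * q * (\<Omega> q * deriv \<Omega> q)))"
      using hb by (intro cov_pw_alg) simp
    finally show "cnj (\<psi> q) * (qop (pop hbar \<psi>) q + pop hbar (qop \<psi>) q)
     = Complex (2 * q * ((\<Omega> q)\<^sup>2 * deriv S q)) (- hbar * ((\<Omega> q)\<^sup>2 + 2 * q * (\<Omega> q * deriv \<Omega> q)))" .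
  qed
  have h1: "has_bochner_integral lborel (\<lambda>q. 2 * q * ((\<Omega> q)\<^sup>2 * deriv S q))
       (2 * (LINT q|lborel. q * (\<Omega> q)\<^sup>2 * deriv S q))"
    by (rule hb_eq[OF has_bochner_integral_mult_right[OF has_bochner_integral_integrable[OF I_qa2s]]])
       (simp add: mult_ac)
  have h2: "has_bochner_integral lborel (\<lambda>q. - hbar * ((\<Omega> q)\<^sup>2 + 2 * q * (\<Omega> q * deriv \<Omega> q)))
       (- hbar * 0)"
  proof -
    have "integrable lborel (\<lambda>q. (\<Omega> q)\<^sup>2 + 2 * (q * \<Omega> q * deriv \<Omega> q))"
      by (intro Bochner_Integration.integrable_add integrable_mult_right I_a2 I_qaa)
    from has_bochner_integral_integrable[OF this] have
      "has_bochner_integral lborel (\<lambda>q. (\<Omega> q)\<^sup>2 + 2 * (q * \<Omega> q * deriv \<Omega> q)) 0"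
      unfolding Z2 .
    then show ?thesis
      by (rule hb_eq[OF has_bochner_integral_mult_right]) (simp add: mult_ac)
  qed
  have "expect \<psi> (\<lambda>f q. qop (pop hbar f) q + pop hbar (qop f) q)
      = Complex (2 * (LINT q|lborel. q * (\<Omega> q)\<^sup>2 * deriv S q)) (- hbar * 0)"
    unfolding expect_def eq by (rule has_bochner_integral_integral_eq[OF hb_Complex[OF h1 h2]])
  also have "\<dots> = complex_of_real (2 * (LINT q|lborel. q * (\<Omega> q)\<^sup>2 * deriv S q))"
    by (rule complex_eqI) simp_all
  finally show ?thesis unfolding \<psi>_def .
qed

lemma varq_eq: "varq (wavefun hbar \<Omega> S) = complex_of_real
   ((LINT q|lborel. q\<^sup>2 * (\<Omega> q)\<^sup>2) - (LINT q|lborel. q * (\<Omega> q)\<^sup>2)\<^sup>2)"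
  unfolding varq_def E_qq E_q by simp

lemma varp_eq: "varp hbar (wavefun hbar \<Omega> S) = complex_of_real
   (hbar\<^sup>2 * (LINT q|lborel. (deriv \<Omega> q)\<^sup>2) + (LINT q|lborel. (\<Omega> q)\<^sup>2 * (deriv S q)\<^sup>2)
     - (LINT q|lborel. (\<Omega> q)\<^sup>2 * deriv S q)\<^sup>2)"
  unfolding varp_def E_pp E_p by simp

lemma covdS_eq: "cov_dS \<Omega> S = (LINT q|lborel. (\<Omega> q)\<^sup>2 * (deriv S q)\<^sup>2)
     - (LINT q|lborel. (\<Omega> q)\<^sup>2 * deriv S q)\<^sup>2"
  unfolding cov_dS_def mean_Omega_def ..

lemma covqp_eq: "covqp hbar (wavefun hbar \<Omega> S) = complex_of_real
   ((LINT q|lborel. q * (\<Omega> q)\<^sup>2 * deriv S q)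
     - (LINT q|lborel. q * (\<Omega> q)\<^sup>2) * (LINT q|lborel. (\<Omega> q)\<^sup>2 * deriv S q))"
  unfolding covqp_def E_cov E_q E_p by simp

lemma P_val: "(LINT q|lborel. q * \<Omega> q * deriv \<Omega> q) = - 1/2"
proof -
  have "(LINT q|lborel. (\<Omega> q)\<^sup>2 + 2 * (q * \<Omega> q * deriv \<Omega> q))
      = (LINT q|lborel. (\<Omega> q)\<^sup>2) + 2 * (LINT q|lborel. q * \<Omega> q * deriv \<Omega> q)"
    by (simp add: Bochner_Integration.integral_add[OF I_a2 integrable_mult_right[OF I_qaa]])
  moreover have "(LINT q|lborel. (\<Omega> q)\<^sup>2) = 1" by (rule has_bochner_integral_integral_eq[OF hb_a2])
  ultimately show ?thesis using Z2 by simp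
qed

lemma main1: "1/4 \<le> ((LINT q|lborel. q\<^sup>2 * (\<Omega> q)\<^sup>2) - (LINT q|lborel. q * (\<Omega> q)\<^sup>2)\<^sup>2)
    * (LINT q|lborel. (deriv \<Omega> q)\<^sup>2)"
proof -
  define Q1 where "Q1 = (LINT q|lborel. q * (\<Omega> q)\<^sup>2)"
  define Q2 where "Q2 = (LINT q|lborel. q\<^sup>2 * (\<Omega> q)\<^sup>2)"
  define K where "K = (LINT q|lborel. (deriv \<Omega> q)\<^sup>2)"
  define P where "P = (LINT q|lborel. q * \<Omega> q * deriv \<Omega> q)"
  have A: "has_bochner_integral lborel (\<lambda>q. ((q - Q1) * \<Omega> q)\<^sup>2) (Q2 - 2 * Q1 * Q1 + Q1\<^sup>2 * 1)"
  proof -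
    have "has_bochner_integral lborel (\<lambda>q. q\<^sup>2 * (\<Omega> q)\<^sup>2 - (2 * Q1) * (q * (\<Omega> q)\<^sup>2) + Q1\<^sup>2 * (\<Omega> q)\<^sup>2)
        (Q2 - 2 * Q1 * Q1 + Q1\<^sup>2 * 1)"
      unfolding Q1_def Q2_def
      by (intro has_bochner_integral_add has_bochner_integral_diff has_bochner_integral_mult_right
          has_bochner_integral_integrable I_q2a2 I_qa2 hb_a2)
    then show ?thesis by (rule hb_eq) (simp add: power2_eq_square algebra_simps)
  qed
  have B: "has_bochner_integral lborel (\<lambda>q. ((q - Q1) * \<Omega> q) * deriv \<Omega> q) (P - Q1 * 0)"
  proof -
    have "has_bochner_integral lborel (\<lambda>q. q * \<Omega> q * deriv \<Omega> q - Q1 * (\<Omega> q * deriv \<Omega> q))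
        (P - Q1 * 0)"
      unfolding P_def Z1[symmetric]
      by (intro has_bochner_integral_diff has_bochner_integral_mult_right
          has_bochner_integral_integrable I_qaa I_aa)
    then show ?thesis by (rule hb_eq) (simp add: algebra_simps)
  qed
  have C: "has_bochner_integral lborel (\<lambda>q. (deriv \<Omega> q)\<^sup>2) K"
    unfolding K_def by (rule has_bochner_integral_integrable[OF I_dO2])
  have "(P - Q1 * 0)\<^sup>2 \<le> (Q2 - 2 * Q1 * Q1 + Q1\<^sup>2 * 1) * K" by (rule CS_bochner[OF A B C])
  moreover have "P = - 1/2" unfolding P_def by (rule P_val)
  ultimately show ?thesis unfolding Q1_def[symmetric] Q2_def[symmetric] K_def[symmetric]
    by (simp add: power2_eq_square algebra_simps)
qed

lemma main2: "((LINT q|lborel. q * (\<Omega> q)\<^sup>2 * deriv S q)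
     - (LINT q|lborel. q * (\<Omega> q)\<^sup>2) * (LINT q|lborel. (\<Omega> q)\<^sup>2 * deriv S q))\<^sup>2
  \<le> ((LINT q|lborel. (\<Omega> q)\<^sup>2 * (deriv S q)\<^sup>2) - (LINT q|lborel. (\<Omega> q)\<^sup>2 * deriv S q)\<^sup>2)
    * ((LINT q|lborel. q\<^sup>2 * (\<Omega> q)\<^sup>2) - (LINT q|lborel. q * (\<Omega> q)\<^sup>2)\<^sup>2)"
proof -
  define Q1 where "Q1 = (LINT q|lborel. q * (\<Omega> q)\<^sup>2)"
  define Q2 where "Q2 = (LINT q|lborel. q\<^sup>2 * (\<Omega> q)\<^sup>2)"
  define M1 where "M1 = (LINT q|lborel. (\<Omega> q)\<^sup>2 * deriv S q)"
  define M2 where "M2 = (LINT q|lborel. (\<Omega> q)\<^sup>2 * (deriv S q)\<^sup>2)"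
  define C1 where "C1 = (LINT q|lborel. q * (\<Omega> q)\<^sup>2 * deriv S q)"
  have A: "has_bochner_integral lborel (\<lambda>q. ((q - Q1) * \<Omega> q)\<^sup>2) (Q2 - 2 * Q1 * Q1 + Q1\<^sup>2 * 1)"
  proof -
    have "has_bochner_integral lborel (\<lambda>q. q\<^sup>2 * (\<Omega> q)\<^sup>2 - (2 * Q1) * (q * (\<Omega> q)\<^sup>2) + Q1\<^sup>2 * (\<Omega> q)\<^sup>2)
        (Q2 - 2 * Q1 * Q1 + Q1\<^sup>2 * 1)"
      unfolding Q1_def Q2_def
      by (intro has_bochner_integral_add has_bochner_integral_diff has_bochner_integral_mult_right
          has_bochner_integral_integrable I_q2a2 I_qa2 hb_a2)
    then show ?thesis by (rule hb_eq) (simp add: power2_eq_square algebra_simps)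
  qed
  have B: "has_bochner_integral lborel (\<lambda>q. ((q - Q1) * \<Omega> q) * ((deriv S q - M1) * \<Omega> q))
      (C1 - M1 * Q1 - Q1 * M1 + (Q1 * M1) * 1)"
  proof -
    have "has_bochner_integral lborel (\<lambda>q. q * (\<Omega> q)\<^sup>2 * deriv S q - M1 * (q * (\<Omega> q)\<^sup>2)
         - Q1 * ((\<Omega> q)\<^sup>2 * deriv S q) + (Q1 * M1) * (\<Omega> q)\<^sup>2)
        (C1 - M1 * Q1 - Q1 * M1 + (Q1 * M1) * 1)"
      unfolding Q1_def M1_def C1_def
      by (intro has_bochner_integral_add has_bochner_integral_diff has_bochner_integral_mult_right
          has_bochner_integral_integrable I_qa2s I_qa2 I_a2s hb_a2)
    then show ?thesis by (rule hb_eq) (simp add: power2_eq_square algebra_simps)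
  qed
  have C: "has_bochner_integral lborel (\<lambda>q. ((deriv S q - M1) * \<Omega> q)\<^sup>2) (M2 - 2 * M1 * M1 + M1\<^sup>2 * 1)"
  proof -
    have "has_bochner_integral lborel (\<lambda>q. (\<Omega> q)\<^sup>2 * (deriv S q)\<^sup>2 - (2 * M1) * ((\<Omega> q)\<^sup>2 * deriv S q)
         + M1\<^sup>2 * (\<Omega> q)\<^sup>2)
        (M2 - 2 * M1 * M1 + M1\<^sup>2 * 1)"
      unfolding M1_def M2_def
      by (intro has_bochner_integral_add has_bochner_integral_diff has_bochner_integral_mult_right
          has_bochner_integral_integrable I_aS I_a2s hb_a2)
    then show ?thesis by (rule hb_eq) (simp add: power2_eq_square algebra_simps)
  qed
  have "(C1 - M1 * Q1 - Q1 * M1 + (Q1 * M1) * 1)\<^sup>2 \<le> (Q2 - 2 * Q1 * Q1 + Q1\<^sup>2 * 1) * (M2 - 2 * M1 * M1 + M1\<^sup>2 * 1)"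
    by (rule CS_bochner[OF A B C])
  then show ?thesis unfolding Q1_def[symmetric] Q2_def[symmetric] M1_def[symmetric] M2_def[symmetric] C1_def[symmetric]
    by (simp add: power2_eq_square algebra_simps)
qed

end


definition Om_ex :: "real \<Rightarrow> real" where "Om_ex q = exp (-(q\<^sup>2)/4) * sqrt (1 / sqrt (2*pi))"
definition S_ex :: "real \<Rightarrow> real" where "S_ex q = q^3 / 3"

lemma dOm1: "(Om_ex has_real_derivative (-(q/2) * Om_ex q)) (at q)"
  unfolding Om_ex_def[abs_def] by (auto intro!: derivative_eq_intros simp: field_simps power2_eq_square)

lemma deriv_Om1: "deriv Om_ex = (\<lambda>q. -(q/2) * Om_ex q)"
  by (rule ext) (rule DERIV_imp_deriv[OF dOm1])

lemma ddOm1: "((\<lambda>q. -(q/2) * Om_ex q) has_real_derivative ((q\<^sup>2/4 - 1/2) * Om_ex q)) (at q)"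
  by (auto intro!: derivative_eq_intros dOm1 simp: field_simps power2_eq_square)

lemma dderiv_Om1: "deriv (deriv Om_ex) = (\<lambda>q. (q\<^sup>2/4 - 1/2) * Om_ex q)"
  unfolding deriv_Om1 by (rule ext) (rule DERIV_imp_deriv[OF ddOm1])

lemma dS1: "(S_ex has_real_derivative q\<^sup>2) (at q)"
  unfolding S_ex_def[abs_def] by (auto intro!: derivative_eq_intros simp: field_simps power2_eq_square)

lemma deriv_S1: "deriv S_ex = (\<lambda>q. q\<^sup>2)"
  by (rule ext) (rule DERIV_imp_deriv[OF dS1])

lemma ddS1: "((\<lambda>q. q\<^sup>2) has_real_derivative (2 * q)) (at q)"
  by (auto intro!: derivative_eq_intros)

lemma dderiv_S1: "deriv (deriv S_ex) = (\<lambda>q. 2 * q)"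
  unfolding deriv_S1 by (rule ext) (rule DERIV_imp_deriv[OF ddS1])

lemma diff_of: "(f has_real_derivative D) (at x) \<Longrightarrow> f differentiable at x"
  using DERIV_deriv_iff_real_differentiable DERIV_imp_deriv by metis

lemma Om1_sq: "(Om_ex q)\<^sup>2 = std_normal_density q"
proof -
  have "(Om_ex q)\<^sup>2 = (exp (-(q\<^sup>2)/4))\<^sup>2 * (sqrt (1 / sqrt (2*pi)))\<^sup>2"
    unfolding Om_ex_def by (simp add: power_mult_distrib)
  also have "(exp (-(q\<^sup>2)/4))\<^sup>2 = exp (-(q\<^sup>2)/2)"
    by (simp add: power2_eq_square exp_add[symmetric])
  also have "(sqrt (1 / sqrt (2*pi)))\<^sup>2 = 1 / sqrt (2*pi)"
    by simp
  finally show ?thesis unfolding std_normal_density_def by simp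
qed

lemma mom: "integrable lborel (\<lambda>x. std_normal_density x * x ^ k)"
  by (rule integrable_std_normal_moment)

lemma int_cong: "integrable M f \<Longrightarrow> (\<And>x. f x = g x) \<Longrightarrow> integrable M g"
  by (metis ext)

lemma mom0: "has_bochner_integral lborel (\<lambda>x. std_normal_density x) 1"
  using std_normal_moment_even[of 0] by simp
lemma mom1: "has_bochner_integral lborel (\<lambda>x. std_normal_density x * x) 0"
  using std_normal_moment_odd[of 0] by simp
lemma mom2: "has_bochner_integral lborel (\<lambda>x. std_normal_density x * x\<^sup>2) 1"
  using std_normal_moment_even[of 1] by simp
lemma mom3: "has_bochner_integral lborel (\<lambda>x. std_normal_density x * x^3) 0"
  using std_normal_moment_odd[of 1] by (simp add: numeral_eq_Suc)
lemma mom4: "has_bochner_integral lborel (\<lambda>x. std_normal_density x * x^4) 3"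
proof -
  have "fact (2 * 2) / (2 ^ 2 * fact 2) = (3::real)" by (simp add: fact_numeral)
  then show ?thesis using std_normal_moment_even[of 2] by simp
qed

lemma smooth1: "smooth_st Om_ex S_ex"
proof
  fix q
  show "Om_ex differentiable at q" by (rule diff_of[OF dOm1])
  show "deriv Om_ex differentiable at q" unfolding deriv_Om1 by (rule diff_of[OF ddOm1])
  show "S_ex differentiable at q" by (rule diff_of[OF dS1])
  show "deriv S_ex differentiable at q" unfolding deriv_S1 by (rule diff_of[OF ddS1])
qed

lemma D_eq: "std_normal_density x = Om_ex x * Om_ex x"
  using Om1_sq[of x] by (simp add: power2_eq_square)

lemma adm1: "hbar > 0 \<Longrightarrow> admissible hbar Om_ex S_ex"
proof -
  assume hb: "hbar > 0"
  interpret sm: smooth_st hbar Om_ex S_ex by (rule smooth1)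
  have c1: "continuous_on UNIV (deriv (deriv Om_ex))"
    unfolding dderiv_Om1 by (intro continuous_intros sm.contO) auto
  have c2: "continuous_on UNIV (deriv (deriv S_ex))"
    unfolding dderiv_S1 by (intro continuous_intros)
  have h7: "has_bochner_integral lborel (\<lambda>q. (Om_ex q)\<^sup>2) 1"
    by (rule hb_eq[OF mom0]) (simp add: Om1_sq)
  have l1: "(Om_ex \<longlongrightarrow> 0) at_top" unfolding Om_ex_def[abs_def] by real_asymp
  have l2: "(Om_ex \<longlongrightarrow> 0) at_bot" unfolding Om_ex_def[abs_def] by real_asymp
  have i10: "integrable lborel (\<lambda>q. q\<^sup>2 * (Om_ex q)\<^sup>2)"
    by (rule int_cong[OF mom[of 2]]) (simp add: Om1_sq mult_ac)
  have i11: "integrable lborel (\<lambda>q. (norm (vector_derivative (wavefun hbar Om_ex S_ex) (at q)))\<^sup>2)"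
  proof -
    have "integrable lborel (\<lambda>q. (1/4) * (std_normal_density q * q ^ 2) + (1 / hbar\<^sup>2) * (std_normal_density q * q ^ 4))"
      by (intro Bochner_Integration.integrable_add integrable_mult_right mom)
    then show ?thesis
    proof (rule int_cong)
      fix q
      show "(1/4) * (std_normal_density q * q ^ 2) + (1 / hbar\<^sup>2) * (std_normal_density q * q ^ 4)
          = (norm (vector_derivative (wavefun hbar Om_ex S_ex) (at q)))\<^sup>2"
        unfolding sm.vd_psi sm.norm_dpsi deriv_Om1 deriv_S1 D_eq using hb
        by (simp add: field_simps power2_eq_square power4_eq_xxxx)
    qed
  qed
  have i12: "integrable lborel (\<lambda>q. cnj (wavefun hbar Om_ex S_ex q) * pop hbar (pop hbar (wavefun hbar Om_ex S_ex)) q)"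
  proof (rule sm.pp_int_crit)
    show "hbar \<noteq> 0" using hb by simp
    have "integrable lborel (\<lambda>q. (1/4) * (std_normal_density q * q ^ 2) - (1/2) * (std_normal_density q * q ^ 0))"
      by (intro Bochner_Integration.integrable_diff integrable_mult_right mom)
    then show "integrable lborel (\<lambda>q. Om_ex q * deriv (deriv Om_ex) q)"
      by (rule int_cong) (simp add: dderiv_Om1 D_eq field_simps power2_eq_square)
    show "integrable lborel (\<lambda>q. (Om_ex q)\<^sup>2 * (deriv S_ex q)\<^sup>2)"
      by (rule int_cong[OF mom[of 4]]) (simp add: deriv_S1 D_eq field_simps power2_eq_square power4_eq_xxxx)
    have "integrable lborel (\<lambda>q. (-1/2) * (std_normal_density q * q ^ 3))"
      by (intro integrable_mult_right mom)
    then show "integrable lborel (\<lambda>q. Om_ex q * deriv Om_ex q * deriv S_ex q)"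
      by (rule int_cong) (simp add: deriv_S1 deriv_Om1 D_eq field_simps power2_eq_square power3_eq_cube)
    have "integrable lborel (\<lambda>q. 2 * (std_normal_density q * q ^ 1))"
      by (intro integrable_mult_right mom)
    then show "integrable lborel (\<lambda>q. (Om_ex q)\<^sup>2 * deriv (deriv S_ex) q)"
      by (rule int_cong) (simp add: dderiv_S1 D_eq field_simps power2_eq_square)
  qed
  show ?thesis unfolding admissible_def
    using sm.dOa sm.ddOa sm.dSa sm.ddSa c1 c2 h7 l1 l2 i10 i11 i12 by blast
qed

lemma v_Q1: "(LINT q|lborel. q * (Om_ex q)\<^sup>2) = 0"
  by (rule has_bochner_integral_integral_eq[OF hb_eq[OF mom1]]) (simp add: Om1_sq mult_ac)
lemma v_Q2: "(LINT q|lborel. q\<^sup>2 * (Om_ex q)\<^sup>2) = 1"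
  by (rule has_bochner_integral_integral_eq[OF hb_eq[OF mom2]]) (simp add: Om1_sq mult_ac)
lemma v_M1: "(LINT q|lborel. (Om_ex q)\<^sup>2 * deriv S_ex q) = 1"
  by (rule has_bochner_integral_integral_eq[OF hb_eq[OF mom2]]) (simp add: Om1_sq deriv_S1 mult_ac)
lemma v_M2: "(LINT q|lborel. (Om_ex q)\<^sup>2 * (deriv S_ex q)\<^sup>2) = 3"
  by (rule has_bochner_integral_integral_eq[OF hb_eq[OF mom4]]) (simp add: D_eq deriv_S1 mult_ac power2_eq_square power4_eq_xxxx)
lemma v_C1: "(LINT q|lborel. q * (Om_ex q)\<^sup>2 * deriv S_ex q) = 0"
  by (rule has_bochner_integral_integral_eq[OF hb_eq[OF mom3]]) (simp add: D_eq deriv_S1 mult_ac power2_eq_square power3_eq_cube)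

lemma cle: "complex_of_real a \<le> complex_of_real b \<longleftrightarrow> a \<le> b"
  by (simp add: less_eq_complex_def)
lemma cless: "complex_of_real a < complex_of_real b \<longleftrightarrow> a < b"
  by (simp add: less_complex_def)

theorem theorem4:
  fixes m c \<xi>p hbar :: real and U :: "real \<Rightarrow> real" and \<Omega> S :: "real \<Rightarrow> real"
  assumes "m > 0" and "hbar > 0" and "admissible hbar \<Omega> S"
  shows "(0 \<le> varp hbar (wavefun hbar \<Omega> S) * varq (wavefun hbar \<Omega> S)
              - complex_of_real (cov_dS \<Omega> S) * varq (wavefun hbar \<Omega> S)
              - complex_of_real (hbar\<^sup>2 / 4)) \<and>
         (varp hbar (wavefun hbar \<Omega> S) * varq (wavefun hbar \<Omega> S)
              - complex_of_real (cov_dS \<Omega> S) * varq (wavefun hbar \<Omega> S)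
              - complex_of_real (hbar\<^sup>2 / 4)
         \<le> varq (wavefun hbar \<Omega> S) * varp hbar (wavefun hbar \<Omega> S)
              - (covqp hbar (wavefun hbar \<Omega> S))\<^sup>2 - complex_of_real (hbar\<^sup>2 / 4)) \<and>
         (\<exists>\<Omega>1 S1. admissible hbar \<Omega>1 S1 \<and>
           varp hbar (wavefun hbar \<Omega>1 S1) * varq (wavefun hbar \<Omega>1 S1)
              - complex_of_real (cov_dS \<Omega>1 S1) * varq (wavefun hbar \<Omega>1 S1)
              - complex_of_real (hbar\<^sup>2 / 4)
         < varq (wavefun hbar \<Omega>1 S1) * varp hbar (wavefun hbar \<Omega>1 S1)
              - (covqp hbar (wavefun hbar \<Omega>1 S1))\<^sup>2 - complex_of_real (hbar\<^sup>2 / 4))"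
proof -
  interpret A: adm_st hbar \<Omega> S using assms(2,3) by unfold_locales
  have ad1: "admissible hbar Om_ex S_ex" by (rule adm1[OF assms(2)])
  interpret B: adm_st hbar Om_ex S_ex using assms(2) ad1 by unfold_locales
  define Q1 where "Q1 = (LINT q|lborel. q * (\<Omega> q)\<^sup>2)"
  define Q2 where "Q2 = (LINT q|lborel. q\<^sup>2 * (\<Omega> q)\<^sup>2)"
  define K where "K = (LINT q|lborel. (deriv \<Omega> q)\<^sup>2)"
  define M1 where "M1 = (LINT q|lborel. (\<Omega> q)\<^sup>2 * deriv S q)"
  define M2 where "M2 = (LINT q|lborel. (\<Omega> q)\<^sup>2 * (deriv S q)\<^sup>2)"
  define C1 where "C1 = (LINT q|lborel. q * (\<Omega> q)\<^sup>2 * deriv S q)"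
  have vq: "varq (wavefun hbar \<Omega> S) = complex_of_real (Q2 - Q1\<^sup>2)"
    unfolding Q1_def Q2_def by (rule A.varq_eq)
  have vp: "varp hbar (wavefun hbar \<Omega> S) = complex_of_real (hbar\<^sup>2 * K + M2 - M1\<^sup>2)"
    unfolding K_def M1_def M2_def by (rule A.varp_eq)
  have cd: "cov_dS \<Omega> S = M2 - M1\<^sup>2"
    unfolding M1_def M2_def by (rule A.covdS_eq)
  have cq: "covqp hbar (wavefun hbar \<Omega> S) = complex_of_real (C1 - Q1 * M1)"
    unfolding C1_def Q1_def M1_def by (rule A.covqp_eq)
  have m1: "1/4 \<le> (Q2 - Q1\<^sup>2) * K"
    unfolding Q1_def Q2_def K_def by (rule A.main1)
  have m2: "(C1 - Q1 * M1)\<^sup>2 \<le> (M2 - M1\<^sup>2) * (Q2 - Q1\<^sup>2)"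
    unfolding C1_def Q1_def M1_def M2_def Q2_def by (rule A.main2)
  have L: "varp hbar (wavefun hbar \<Omega> S) * varq (wavefun hbar \<Omega> S)
              - complex_of_real (cov_dS \<Omega> S) * varq (wavefun hbar \<Omega> S)
              - complex_of_real (hbar\<^sup>2 / 4)
        = complex_of_real ((hbar\<^sup>2 * K + M2 - M1\<^sup>2) * (Q2 - Q1\<^sup>2) - (M2 - M1\<^sup>2) * (Q2 - Q1\<^sup>2) - hbar\<^sup>2 / 4)"
    unfolding vq vp cd by simp
  have R: "varq (wavefun hbar \<Omega> S) * varp hbar (wavefun hbar \<Omega> S)
              - (covqp hbar (wavefun hbar \<Omega> S))\<^sup>2 - complex_of_real (hbar\<^sup>2 / 4)
        = complex_of_real ((Q2 - Q1\<^sup>2) * (hbar\<^sup>2 * K + M2 - M1\<^sup>2) - (C1 - Q1 * M1)\<^sup>2 - hbar\<^sup>2 / 4)"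
    unfolding vq vp cq by simp
  have P1: "0 \<le> (hbar\<^sup>2 * K + M2 - M1\<^sup>2) * (Q2 - Q1\<^sup>2) - (M2 - M1\<^sup>2) * (Q2 - Q1\<^sup>2) - hbar\<^sup>2 / 4"
  proof -
    have "hbar\<^sup>2 * (1/4) \<le> hbar\<^sup>2 * ((Q2 - Q1\<^sup>2) * K)" by (rule mult_left_mono[OF m1]) simp
    moreover have "(hbar\<^sup>2 * K + M2 - M1\<^sup>2) * (Q2 - Q1\<^sup>2) - (M2 - M1\<^sup>2) * (Q2 - Q1\<^sup>2) - hbar\<^sup>2 / 4
        = hbar\<^sup>2 * ((Q2 - Q1\<^sup>2) * K) - hbar\<^sup>2 * (1/4)" by (simp add: algebra_simps)
    ultimately show ?thesis by linarith
  qed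
  have P2: "(hbar\<^sup>2 * K + M2 - M1\<^sup>2) * (Q2 - Q1\<^sup>2) - (M2 - M1\<^sup>2) * (Q2 - Q1\<^sup>2) - hbar\<^sup>2 / 4
      \<le> (Q2 - Q1\<^sup>2) * (hbar\<^sup>2 * K + M2 - M1\<^sup>2) - (C1 - Q1 * M1)\<^sup>2 - hbar\<^sup>2 / 4"
    using m2 by (simp add: algebra_simps)
  have P3: "varp hbar (wavefun hbar Om_ex S_ex) * varq (wavefun hbar Om_ex S_ex)
              - complex_of_real (cov_dS Om_ex S_ex) * varq (wavefun hbar Om_ex S_ex)
              - complex_of_real (hbar\<^sup>2 / 4)
         < varq (wavefun hbar Om_ex S_ex) * varp hbar (wavefun hbar Om_ex S_ex)
              - (covqp hbar (wavefun hbar Om_ex S_ex))\<^sup>2 - complex_of_real (hbar\<^sup>2 / 4)"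
  proof -
    define K1 where "K1 = (LINT q|lborel. (deriv Om_ex q)\<^sup>2)"
    have vq1: "varq (wavefun hbar Om_ex S_ex) = 1"
      unfolding B.varq_eq v_Q1 v_Q2 by simp
    have vp1: "varp hbar (wavefun hbar Om_ex S_ex) = complex_of_real (hbar\<^sup>2 * K1 + 3 - 1)"
      unfolding B.varp_eq v_M1 v_M2 K1_def by simp
    have cd1: "cov_dS Om_ex S_ex = 2"
      unfolding B.covdS_eq v_M1 v_M2 by simp
    have cq1: "covqp hbar (wavefun hbar Om_ex S_ex) = 0"
      unfolding B.covqp_eq v_C1 v_Q1 v_M1 by simp
    show ?thesis unfolding vq1 vp1 cd1 cq1
      by (simp add: less_complex_def)
  qed
  have G1: "0 \<le> complex_of_real ((hbar\<^sup>2 * K + M2 - M1\<^sup>2) * (Q2 - Q1\<^sup>2) - (M2 - M1\<^sup>2) * (Q2 - Q1\<^sup>2) - hbar\<^sup>2 / 4)"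
    using P1 by (simp add: less_eq_complex_def)
  show ?thesis
    unfolding L R cle using G1 P2 P3 ad1 by blast
qed

end
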